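(* Let $\theta\in(0,\frac{\pi}{2})$ and let $\Sigma^{\tan\theta}\subset\mathbb{R}^4$ be the minimal surface given by the conformal harmonic map \[ \mathbf{X}^{\tan\theta}(U,V)=\Big(\frac{\sin\theta}{\cos\theta}\sinh U\cos V,\ \cosh U\cos V,\ \frac{1}{\cos\theta}\cosh U\sin V,\ U\Big),\qquad (U,V)\in\mathbb{R}^2, \] with coordinates $(\mathbf{x}_1,\mathbf{x}_2,\mathbf{x}_3,\mathbf{x}_4)$ on $\mathbb{R}^4$. Then: (1) For each constant $U_0\in\mathbb{R}$, the level set $\mathcal{C}_{U_0}=\Sigma^{\tan\theta}\cap\{\mathbf{x}_4=U_0\}$ is an ellipse; in particular the neck $\mathcal{C}_0=\Sigma^{\tan\theta}\cap\{\mathbf{x}_4=0\}$ is congruent to the ellipse $\mathbf{x}^2+(\cos^2\theta)\,\mathbf{y}^2=1$. (2) As $U\to\infty$ (or $U\to-\infty$), the ellipse $\mathcal{C}_U$ converges to a circle, in the sense that the ratio of the lengths of its two semi-axes tends to $1$. *)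

theory Defs
  imports "HOL-Analysis.Analysis"
begin

definition Xmap :: "real \<Rightarrow> real \<Rightarrow> real \<Rightarrow> real^4" where
  "Xmap \<theta> U V = vector [sin \<theta> / cos \<theta> * sinh U * cos V, cosh U * cos V,
                        1 / cos \<theta> * cosh U * sin V, U]"

definition Sigma_surf :: "real \<Rightarrow> (real^4) set" where
  "Sigma_surf \<theta> = (\<lambda>(U, V). Xmap \<theta> U V) ` UNIV"

definition level_curve :: "real \<Rightarrow> real \<Rightarrow> (real^4) set" where
  "level_curve \<theta> U0 = Sigma_surf \<theta> \<inter> {x. x $ 4 = U0}"

definition ellipse_with_axes :: "'a::real_inner set \<Rightarrow> real \<Rightarrow> real \<Rightarrow> bool" where
  "ellipse_with_axes E A B \<longleftrightarrow>
     (\<exists>c a b. a \<noteq> 0 \<and> b \<noteq> 0 \<and> inner a b = 0 \<and> norm a = A \<and> norm b = B \<and>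
        E = range (\<lambda>t. c + cos t *\<^sub>R a + sin t *\<^sub>R b))"

definition is_ellipse :: "'a::real_inner set \<Rightarrow> bool" where
  "is_ellipse E \<longleftrightarrow> (\<exists>A B. ellipse_with_axes E A B)"

definition congruent_to_planar :: "(real^4) set \<Rightarrow> (real^2) set \<Rightarrow> bool" where
  "congruent_to_planar S P \<longleftrightarrow>
     (\<exists>g :: real^2 \<Rightarrow> real^4. (\<forall>p q. dist (g p) (g q) = dist p q) \<and> g ` P = S)"

end

theory Submission
  imports Defs
begin

lemma vec4_comp [simp]:
  "(vector [x1,x2,x3,x4] :: 'a::zero^4) $ 1 = x1"
  "(vector [x1,x2,x3,x4] :: 'a::zero^4) $ 2 = x2"
  "(vector [x1,x2,x3,x4] :: 'a::zero^4) $ 3 = x3"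
  "(vector [x1,x2,x3,x4] :: 'a::zero^4) $ 4 = x4"
  by (simp_all add: vector_def)

lemma sum4: "sum f (UNIV::4 set) = f 1 + f 2 + f 3 + f 4"
  by (rule sum_4)

lemma vec4_eq: "(x::real^4) = y \<longleftrightarrow> x$1 = y$1 \<and> x$2 = y$2 \<and> x$3 = y$3 \<and> x$4 = y$4"
  by (simp add: vec_eq_iff forall_4)

lemma inner4: "inner (x::real^4) y = x$1*y$1 + x$2*y$2 + x$3*y$3 + x$4*y$4"
  by (simp add: inner_vec_def sum4)

lemma norm4: "norm (x::real^4) = sqrt ((x$1)\<^sup>2 + (x$2)\<^sup>2 + (x$3)\<^sup>2 + (x$4)\<^sup>2)"
  by (simp add: norm_vec_def L2_set_def sum_4)

definition ca :: "real \<Rightarrow> real \<Rightarrow> real^4" where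
  "ca \<theta> U = vector [sin \<theta> / cos \<theta> * sinh U, cosh U, 0, 0]"
definition cb :: "real \<Rightarrow> real \<Rightarrow> real^4" where
  "cb \<theta> U = vector [0, 0, 1 / cos \<theta> * cosh U, 0]"
definition cc :: "real \<Rightarrow> real^4" where
  "cc U = vector [0, 0, 0, U]"

lemma level_eq: "level_curve \<theta> U = range (\<lambda>t. cc U + cos t *\<^sub>R ca \<theta> U + sin t *\<^sub>R cb \<theta> U)"
proof -
  have X: "Xmap \<theta> U' t = cc U' + cos t *\<^sub>R ca \<theta> U' + sin t *\<^sub>R cb \<theta> U'" for U' t
    by (simp add: vec4_eq Xmap_def ca_def cb_def cc_def)
  have "level_curve \<theta> U = (\<lambda>t. Xmap \<theta> U t) ` UNIV"
  proof -
    have X4: "Xmap \<theta> a b $ 4 = a" for a b by (simp add: Xmap_def)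
    show ?thesis unfolding level_curve_def Sigma_surf_def
    proof (rule set_eqI, rule iffI)
      fix x assume "x \<in> range (\<lambda>(U, V). Xmap \<theta> U V) \<inter> {x. x $ 4 = U}"
      then obtain a b where "x = Xmap \<theta> a b" "x $ 4 = U" by auto
      then show "x \<in> range (\<lambda>t. Xmap \<theta> U t)" using X4 by auto
    next
      fix x assume "x \<in> range (\<lambda>t. Xmap \<theta> U t)"
      then obtain b where "x = Xmap \<theta> U b" by auto
      then have "x = (\<lambda>(U, V). Xmap \<theta> U V) (U, b)" "x $ 4 = U" using X4 by auto
      then show "x \<in> range (\<lambda>(U, V). Xmap \<theta> U V) \<inter> {x. x $ 4 = U}" by blast
    qed
  qed
  then show ?thesis using X by simp
qed

lemma ell:
  assumes "0 < \<theta>" "\<theta> < pi / 2"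
  shows "ellipse_with_axes (level_curve \<theta> U) (norm (ca \<theta> U)) (norm (cb \<theta> U))"
proof -
  have "cos \<theta> > 0" using assms by (intro cos_gt_zero) auto
  have "ca \<theta> U $ 2 \<noteq> 0" by (simp add: ca_def)
  then have a: "ca \<theta> U \<noteq> 0" by force
  have "cb \<theta> U $ 3 \<noteq> 0" using \<open>cos \<theta> > 0\<close> by (simp add: cb_def)
  then have b: "cb \<theta> U \<noteq> 0" by force
  have i: "inner (ca \<theta> U) (cb \<theta> U) = 0" by (simp add: inner4 ca_def cb_def)
  show ?thesis unfolding ellipse_with_axes_def level_eq
    by (rule exI[of _ "cc U"], rule exI[of _ "ca \<theta> U"], rule exI[of _ "cb \<theta> U"]) (simp add: a b i)
qed

theorem theorem6p3:
  fixes \<theta> :: real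
  assumes "0 < \<theta>" and "\<theta> < pi / 2"
  shows "(\<forall>U0. is_ellipse (level_curve \<theta> U0))
       \<and> congruent_to_planar (level_curve \<theta> 0)
           {p :: real^2. (p $ 1)\<^sup>2 + (cos \<theta>)\<^sup>2 * (p $ 2)\<^sup>2 = 1}
       \<and> (\<exists>A B :: real \<Rightarrow> real.
            (\<forall>U. ellipse_with_axes (level_curve \<theta> U) (A U) (B U))
            \<and> ((\<lambda>U. A U / B U) \<longlongrightarrow> 1) at_top
            \<and> ((\<lambda>U. A U / B U) \<longlongrightarrow> 1) at_bot)"
proof (intro conjI)
  have c: "cos \<theta> > 0" using assms by (intro cos_gt_zero) auto
  show "\<forall>U0. is_ellipse (level_curve \<theta> U0)"
    using ell[OF assms] unfolding is_ellipse_def by blast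
  show "congruent_to_planar (level_curve \<theta> 0)
           {p :: real^2. (p $ 1)\<^sup>2 + (cos \<theta>)\<^sup>2 * (p $ 2)\<^sup>2 = 1}"
  proof -
    define g :: "real^2 \<Rightarrow> real^4" where "g p = vector [0, p$1, p$2, 0]" for p
    have D: "dist (g p) (g q) = dist p q" for p q
      by (simp add: dist_norm norm4 g_def norm_vec_def L2_set_def sum_2)
    have E: "g ` {p :: real^2. (p $ 1)\<^sup>2 + (cos \<theta>)\<^sup>2 * (p $ 2)\<^sup>2 = 1} = level_curve \<theta> 0"
    proof (rule set_eqI, rule iffI)
      fix x assume "x \<in> g ` {p :: real^2. (p $ 1)\<^sup>2 + (cos \<theta>)\<^sup>2 * (p $ 2)\<^sup>2 = 1}"
      then obtain p where p0: "(p $ 1)\<^sup>2 + (cos \<theta>)\<^sup>2 * (p $ 2)\<^sup>2 = 1" and x: "x = g p"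
        by blast
      have p: "(p $ 1)\<^sup>2 + (cos \<theta> * p $ 2)\<^sup>2 = 1" using p0 by (simp only: power_mult_distrib)
      obtain t where t: "p$1 = cos t" "cos \<theta> * p$2 = sin t" by (rule sincos_total_2pi[OF p])
      have "p$2 = 1 / cos \<theta> * sin t" using t c by (simp add: field_simps)
      then have "x = cc 0 + cos t *\<^sub>R ca \<theta> 0 + sin t *\<^sub>R cb \<theta> 0"
        using t by (simp add: x g_def vec4_eq ca_def cb_def cc_def)
      then show "x \<in> level_curve \<theta> 0" unfolding level_eq by blast
    next
      fix x assume "x \<in> level_curve \<theta> 0"
      then obtain t where x: "x = cc 0 + cos t *\<^sub>R ca \<theta> 0 + sin t *\<^sub>R cb \<theta> 0"
        unfolding level_eq by blast
      define p :: "real^2" where "p = vector [cos t, sin t / cos \<theta>]"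
      have "x = g p" by (simp add: x g_def p_def vec4_eq ca_def cb_def cc_def)
      moreover have "(p $ 1)\<^sup>2 + (cos \<theta>)\<^sup>2 * (p $ 2)\<^sup>2 = 1"
        using c by (simp add: p_def power_divide)
      ultimately show "x \<in> g ` {p :: real^2. (p $ 1)\<^sup>2 + (cos \<theta>)\<^sup>2 * (p $ 2)\<^sup>2 = 1}" by blast
    qed
    show ?thesis unfolding congruent_to_planar_def using D E by blast
  qed
  have ratio: "norm (ca \<theta> U) / norm (cb \<theta> U) = sqrt ((sin \<theta> * tanh U)\<^sup>2 + (cos \<theta>)\<^sup>2)" for U
  proof -
    have ch: "cosh U > 0" by simp
    have "norm (ca \<theta> U) = sqrt ((sin \<theta> / cos \<theta> * sinh U)\<^sup>2 + (cosh U)\<^sup>2)"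
      by (simp add: norm4 ca_def)
    also have "\<dots> = cosh U / cos \<theta> * sqrt ((sin \<theta> * tanh U)\<^sup>2 + (cos \<theta>)\<^sup>2)"
    proof -
      have "(sin \<theta> / cos \<theta> * sinh U)\<^sup>2 + (cosh U)\<^sup>2
          = (cosh U / cos \<theta>)\<^sup>2 * ((sin \<theta> * tanh U)\<^sup>2 + (cos \<theta>)\<^sup>2)"
        using c ch by (simp add: tanh_def field_simps power2_eq_square)
      then show ?thesis using c ch by (simp add: real_sqrt_mult)
    qed
    moreover have "norm (cb \<theta> U) = cosh U / cos \<theta>"
      using c ch by (simp add: norm4 cb_def)
    ultimately show ?thesis using c ch by simp
  qed
  have lim1: "sqrt ((sin \<theta> * 1)\<^sup>2 + (cos \<theta>)\<^sup>2) = 1" "sqrt ((sin \<theta> * -1)\<^sup>2 + (cos \<theta>)\<^sup>2) = 1"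
    by simp_all
  show "\<exists>A B :: real \<Rightarrow> real.
            (\<forall>U. ellipse_with_axes (level_curve \<theta> U) (A U) (B U))
            \<and> ((\<lambda>U. A U / B U) \<longlongrightarrow> 1) at_top
            \<and> ((\<lambda>U. A U / B U) \<longlongrightarrow> 1) at_bot"
  proof (intro exI conjI allI)
    show "ellipse_with_axes (level_curve \<theta> U) (norm (ca \<theta> U)) (norm (cb \<theta> U))" for U
      by (rule ell[OF assms])
    show "((\<lambda>U. norm (ca \<theta> U) / norm (cb \<theta> U)) \<longlongrightarrow> 1) at_top"
      unfolding ratio
      by (subst lim1(1)[symmetric]) (intro tendsto_intros tanh_real_at_top)
    show "((\<lambda>U. norm (ca \<theta> U) / norm (cb \<theta> U)) \<longlongrightarrow> 1) at_bot"
      unfolding ratio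
      by (subst lim1(2)[symmetric]) (intro tendsto_intros tanh_real_at_bot)
  qed
qed

end
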